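(* Let $M$ be a sparse paving matroid of rank $r$, and let $B_1$ and $B_2$ be disjoint bases of $M$. Then there is a cyclic ordering $(b_1,b_2,\dots,b_r,b_{r+1},\dots,b_{2r})$ of $B_1\cup B_2$ with $B_1=\{b_1,\dots,b_r\}$ and $B_2=\{b_{r+1},\dots,b_{2r}\}$ such that every set of $r$ cyclically-consecutive elements of this cyclic ordering is a basis of $M$.
   Context: A matroid $M$ of rank $r$ is sparse paving if every nonspanning circuit is a hyperplane; equivalently, every $r$-subset of $E(M)$ is a basis or a circuit-hyperplane. *)

theory Defs
  imports Main
begin

definition matroid :: "'a set \<Rightarrow> ('a set \<Rightarrow> bool) \<Rightarrow> bool" where
  "matroid E indep \<longleftrightarrow>
     finite E \<and>
     indep {} \<and>
     (\<forall>X. indep X \<longrightarrow> X \<subseteq> E) \<and>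
     (\<forall>X Y. indep X \<and> Y \<subseteq> X \<longrightarrow> indep Y) \<and>
     (\<forall>X Y. indep X \<and> indep Y \<and> card X < card Y \<longrightarrow>
        (\<exists>y \<in> Y - X. indep (insert y X)))"

definition basis :: "'a set \<Rightarrow> ('a set \<Rightarrow> bool) \<Rightarrow> 'a set \<Rightarrow> bool" where
  "basis E indep B \<longleftrightarrow> indep B \<and> (\<forall>X. indep X \<and> B \<subseteq> X \<longrightarrow> X = B)"

definition rk :: "'a set \<Rightarrow> ('a set \<Rightarrow> bool) \<Rightarrow> 'a set \<Rightarrow> nat" where
  "rk E indep X = Max {card Y | Y. Y \<subseteq> X \<and> indep Y}"

definition matroid_rank :: "'a set \<Rightarrow> ('a set \<Rightarrow> bool) \<Rightarrow> nat" where
  "matroid_rank E indep = rk E indep E"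

definition circuit :: "'a set \<Rightarrow> ('a set \<Rightarrow> bool) \<Rightarrow> 'a set \<Rightarrow> bool" where
  "circuit E indep C \<longleftrightarrow> C \<subseteq> E \<and> \<not> indep C \<and> (\<forall>x \<in> C. indep (C - {x}))"

definition spanning :: "'a set \<Rightarrow> ('a set \<Rightarrow> bool) \<Rightarrow> 'a set \<Rightarrow> bool" where
  "spanning E indep X \<longleftrightarrow> X \<subseteq> E \<and> rk E indep X = rk E indep E"

definition flat :: "'a set \<Rightarrow> ('a set \<Rightarrow> bool) \<Rightarrow> 'a set \<Rightarrow> bool" where
  "flat E indep F \<longleftrightarrow> F \<subseteq> E \<and> (\<forall>x \<in> E - F. rk E indep (insert x F) > rk E indep F)"

definition hyperplane :: "'a set \<Rightarrow> ('a set \<Rightarrow> bool) \<Rightarrow> 'a set \<Rightarrow> bool" where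
  "hyperplane E indep H \<longleftrightarrow> flat E indep H \<and> rk E indep H + 1 = rk E indep E"

definition sparse_paving :: "'a set \<Rightarrow> ('a set \<Rightarrow> bool) \<Rightarrow> bool" where
  "sparse_paving E indep \<longleftrightarrow> matroid E indep \<and>
     (\<forall>C. circuit E indep C \<and> \<not> spanning E indep C \<longrightarrow> hyperplane E indep C)"

end

theory Submission
  imports Defs
begin


lemma rk_set_finite: "finite X \<Longrightarrow> finite {card Y | Y. Y \<subseteq> X \<and> indep Y}"
  by (rule finite_subset[of _ "card ` Pow X"]) auto

lemma rk_ge: "finite X \<Longrightarrow> Y \<subseteq> X \<Longrightarrow> indep Y \<Longrightarrow> card Y \<le> rk E indep X"
  unfolding rk_def by (rule Max_ge[OF rk_set_finite]) auto

lemma rk_obtain: "finite X \<Longrightarrow> indep {} \<Longrightarrow> \<exists>Y. Y \<subseteq> X \<and> indep Y \<and> card Y = rk E indep X"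
proof -
  assume f: "finite X" and e: "indep {}"
  have "rk E indep X \<in> {card Y | Y. Y \<subseteq> X \<and> indep Y}"
    unfolding rk_def by (rule Max_in[OF rk_set_finite[OF f]]) (use e in auto)
  then show ?thesis by auto
qed

locale spm =
  fixes E :: "'a set" and indep :: "'a set \<Rightarrow> bool" and r :: nat and B1 B2 :: "'a set"
  assumes sp: "sparse_paving E indep" and rk: "matroid_rank E indep = r"
    and b1: "basis E indep B1" and b2: "basis E indep B2" and disj: "B1 \<inter> B2 = {}"
begin

lemma mat: "matroid E indep" using sp unfolding sparse_paving_def by simp
lemma finE: "finite E" using mat unfolding matroid_def by simp
lemma indep_empty: "indep {}" using mat unfolding matroid_def by simp
lemma indep_sub: "indep X \<Longrightarrow> X \<subseteq> E" using mat unfolding matroid_def by blast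
lemma indep_subset: "indep X \<Longrightarrow> Y \<subseteq> X \<Longrightarrow> indep Y" using mat unfolding matroid_def by blast
lemma augment: "indep X \<Longrightarrow> indep Y \<Longrightarrow> card X < card Y \<Longrightarrow> \<exists>y\<in>Y-X. indep (insert y X)"
  using mat unfolding matroid_def by blast
lemma rkE: "rk E indep E = r" using rk unfolding matroid_rank_def by simp

lemma indep_card_le: "indep X \<Longrightarrow> card X \<le> r"
  using rk_ge[where E=E and indep=indep, OF finE indep_sub] rkE by metis

lemma basis_card: assumes b: "basis E indep B" shows "card B = r"
proof -
  have iB: "indep B" and mx: "\<And>X. indep X \<Longrightarrow> B \<subseteq> X \<Longrightarrow> X = B"
    using b unfolding basis_def by auto
  have le: "card B \<le> r" using indep_card_le[OF iB] .
  obtain J where J: "J \<subseteq> E" "indep J" "card J = r"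
    using rk_obtain[where E=E and indep=indep, OF finE indep_empty] rkE by metis
  show ?thesis
  proof (rule ccontr)
    assume "card B \<noteq> r"
    then have "card B < card J" using le J by simp
    then obtain y where "y \<in> J - B" "indep (insert y B)" using augment[OF iB J(2)] by blast
    then show False using mx[of "insert y B"] by auto
  qed
qed

lemma indep_basis: assumes "indep X" "card X = r" shows "basis E indep X"
  unfolding basis_def
proof (intro conjI allI impI)
  show "indep X" by fact
  fix X' assume a: "indep X' \<and> X \<subseteq> X'"
  have "finite X'" using indep_sub a finE finite_subset by blast
  moreover have "card X' \<le> card X" using indep_card_le a assms by simp
  ultimately show "X' = X" using a card_seteq by blast
qed

lemma small_indep: assumes XE: "X \<subseteq> E" and cX: "card X < r" shows "indep X"
proof (rule ccontr)
  assume nX: "\<not> indep X"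
  have fX: "finite X" using XE finE finite_subset by blast
  obtain C where C: "C \<subseteq> X \<and> \<not> indep C" and mn: "\<forall>C'. C' \<subseteq> X \<and> \<not> indep C' \<longrightarrow> card C \<le> card C'"
    using ex_has_least_nat[of "\<lambda>C. C \<subseteq> X \<and> \<not> indep C" X card] nX by blast
  have fC: "finite C" using C fX finite_subset by blast
  have Cm: "indep (C - {x})" if "x \<in> C" for x
  proof (rule ccontr)
    assume "\<not> indep (C - {x})"
    then have "card C \<le> card (C - {x})" using mn C by blast
    moreover have "card (C - {x}) < card C" using card_Diff1_less[OF fC that] .
    ultimately show False by simp
  qed
  have circ: "circuit E indep C" unfolding circuit_def using C XE Cm by blast
  obtain Y where Y: "Y \<subseteq> C" "indep Y" "card Y = rk E indep C"
    using rk_obtain[where E=E and indep=indep, OF fC indep_empty] by blast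
  have "Y \<noteq> C" using Y C by blast
  then have "Y \<subset> C" using Y by blast
  then have rkC: "rk E indep C < card C" using Y(3) fC psubset_card_mono by metis
  have cC: "card C \<le> card X" using C fX card_mono by blast
  have "\<not> spanning E indep C" unfolding spanning_def using rkC cC cX rkE by simp
  then have "hyperplane E indep C" using sp circ unfolding sparse_paving_def by blast
  then have "rk E indep C + 1 = r" unfolding hyperplane_def using rkE by simp
  then show False using rkC cC cX by simp
qed

lemma sd2: assumes XE: "X \<subseteq> E" and cX: "card X = r" and xX: "x \<in> X" and yE: "y \<in> E"
  and yX: "y \<notin> X" and nX: "\<not> indep X" shows "indep (insert y (X - {x}))"
proof (rule ccontr)
  assume nY: "\<not> indep (insert y (X - {x}))"
  have fX: "finite X" using XE finE finite_subset by blast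
  let ?Z = "X - {x}"
  have cZ0: "card ?Z = card X - 1" using xX fX by simp
  have "card X > 0" using xX fX card_gt_0_iff by blast
  then have cZ: "card ?Z + 1 = r" using cZ0 cX by simp
  have iZ: "indep ?Z" using small_indep[of ?Z] XE cZ by (meson Diff_subset less_add_one order_trans le_refl)
  have Xm: "indep (X - {e})" if "e \<in> X" for e
  proof -
    have "card (X - {e}) < card X" using card_Diff1_less[OF fX that] .
    then show ?thesis using small_indep[of "X - {e}"] XE cX by blast
  qed
  have circ: "circuit E indep X" unfolding circuit_def using XE nX Xm by blast
  obtain Y where Y: "Y \<subseteq> X" "indep Y" "card Y = rk E indep X"
    using rk_obtain[where E=E and indep=indep, OF fX indep_empty] by blast
  have "Y \<noteq> X" using Y nX by blast
  then have "Y \<subset> X" using Y by blast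
  then have rkX: "rk E indep X < r" using Y(3) fX cX psubset_card_mono by metis
  have "\<not> spanning E indep X" unfolding spanning_def using rkX rkE by simp
  then have "hyperplane E indep X" using sp circ unfolding sparse_paving_def by blast
  then have fl: "rk E indep X < rk E indep (insert y X)"
    unfolding hyperplane_def flat_def using yE yX by blast
  have "card ?Z \<le> rk E indep X" using rk_ge[where E=E and indep=indep and Y="?Z", OF fX _ iZ] by blast
  then have ge: "r \<le> rk E indep (insert y X)" using fl cZ by simp
  obtain J where J: "J \<subseteq> insert y X" "indep J" "card J = rk E indep (insert y X)"
    using rk_obtain[where E=E and indep=indep and X="insert y X", OF _ indep_empty] fX by blast
  have "card ?Z < card J" using J ge cZ by simp
  then obtain e where e: "e \<in> J - ?Z" "indep (insert e ?Z)" using augment[OF iZ J(2)] by blast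
  have "e = x \<or> e = y" using e J by blast
  moreover have "insert x ?Z = X" using xX by blast
  ultimately show False using e nX nY by auto
qed

lemma sd2': "X \<subseteq> E \<Longrightarrow> card X = r \<Longrightarrow> x \<in> X \<Longrightarrow> y \<in> E \<Longrightarrow> y \<notin> X \<Longrightarrow> Y = insert y (X - {x})
  \<Longrightarrow> indep X \<or> indep Y"
  using sd2 by blast

end


lemma card_fun_le: "S \<subseteq> A \<times> C \<Longrightarrow> finite A \<Longrightarrow> (\<And>x y y'. (x,y)\<in>S \<Longrightarrow> (x,y')\<in>S \<Longrightarrow> y = y') \<Longrightarrow> card S \<le> card A"
  by (rule card_inj_on_le[of fst]) (auto simp: inj_on_def)

lemma third: "finite P \<Longrightarrow> 3 \<le> card P \<Longrightarrow> \<exists>a\<in>P. a \<noteq> x \<and> a \<noteq> x'"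
proof -
  assume f: "finite P" and c: "3 \<le> card P"
  have "card P - card {x,x'} \<le> card (P - {x,x'})" by (rule diff_card_le_card_Diff) simp
  moreover have "card {x,x'} \<le> 2" by (simp add: card_insert_le_m1)
  ultimately have "card (P - {x,x'}) > 0" using c by linarith
  then show ?thesis by (metis card_gt_0_iff DiffE ex_in_conv insertCI)
qed

context spm begin

definition G :: "'a set \<Rightarrow> bool" where "G S \<longleftrightarrow> indep S \<and> indep (B1 \<union> B2 - S)"
definition W :: "'a set \<Rightarrow> 'a set \<Rightarrow> 'a set" where "W P Q = (B1 - P) \<union> Q"
definition OK :: "'a set \<Rightarrow> 'a set \<Rightarrow> bool" where
  "OK P Q \<longleftrightarrow> (card P = 2 \<longrightarrow> (\<exists>p\<in>P. \<exists>q\<in>Q. G (W {p} {q})))"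

lemma B1E: "B1 \<subseteq> E" using b1 indep_sub unfolding basis_def by blast
lemma B2E: "B2 \<subseteq> E" using b2 indep_sub unfolding basis_def by blast
lemma fB1: "finite B1" using B1E finE finite_subset by blast
lemma fB2: "finite B2" using B2E finE finite_subset by blast
lemma cB1: "card B1 = r" using basis_card b1 by blast
lemma cB2: "card B2 = r" using basis_card b2 by blast
lemma iB1: "indep B1" using b1 unfolding basis_def by blast
lemma iB2: "indep B2" using b2 unfolding basis_def by blast

lemma G_B1: "G B1"
proof -
  have "B1 \<union> B2 - B1 = B2" using disj by blast
  then show ?thesis unfolding G_def using iB1 iB2 by simp
qed

lemma card_W: assumes "P \<subseteq> B1" "Q \<subseteq> B2" "card P = card Q" shows "card (W P Q) = r"
proof -
  have fP: "finite P" using assms fB1 finite_subset by blast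
  have fQ: "finite Q" using assms fB2 finite_subset by blast
  have d: "(B1 - P) \<inter> Q = {}" using assms disj by blast
  have "card (W P Q) = card (B1 - P) + card Q" unfolding W_def
    using card_Un_disjoint[OF _ fQ d] fB1 by simp
  moreover have "card (B1 - P) = r - card P" using card_Diff_subset[OF fP assms(1)] cB1 by simp
  moreover have "card P \<le> r" using card_mono[OF fB1 assms(1)] cB1 by simp
  ultimately show ?thesis using assms(3) by simp
qed

lemma W_sub: "Q \<subseteq> B2 \<Longrightarrow> W P Q \<subseteq> B1 \<union> B2" unfolding W_def by blast

lemma card_U: "card (B1 \<union> B2) = 2 * r"
  using card_Un_disjoint[OF fB1 fB2 disj] cB1 cB2 by simp

lemma card_cW: assumes "P \<subseteq> B1" "Q \<subseteq> B2" "card P = card Q" shows "card (B1 \<union> B2 - W P Q) = r"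
proof -
  have "finite (W P Q)" using W_sub[OF assms(2)] fB1 fB2 finite_subset by blast
  then have "card (B1 \<union> B2 - W P Q) = card (B1 \<union> B2) - card (W P Q)"
    using card_Diff_subset W_sub[OF assms(2)] by blast
  then show ?thesis using card_U card_W[OF assms] by simp
qed

lemma UE: "B1 \<union> B2 \<subseteq> E" using B1E B2E by blast

lemma pS: assumes "p \<in> B1" "q \<in> B2" "q' \<in> B2" "q \<noteq> q'"
  shows "indep (W {p} {q}) \<or> indep (W {p} {q'})"
proof (rule sd2')
  show "W {p} {q} \<subseteq> E" using W_sub[of "{q}"] UE assms by blast
  show "card (W {p} {q}) = r" using card_W assms by simp
  show "q \<in> W {p} {q}" unfolding W_def by blast
  show "q' \<in> E" using assms B2E by blast
  show "q' \<notin> W {p} {q}" unfolding W_def using assms disj by blast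
  show "W {p} {q'} = insert q' (W {p} {q} - {q})" unfolding W_def using assms disj by blast
qed

lemma pT: assumes "p \<in> B1" "q \<in> B2" "q' \<in> B2" "q \<noteq> q'"
  shows "indep (B1 \<union> B2 - W {p} {q}) \<or> indep (B1 \<union> B2 - W {p} {q'})"
proof (rule sd2')
  show "B1 \<union> B2 - W {p} {q} \<subseteq> E" using UE by blast
  show "card (B1 \<union> B2 - W {p} {q}) = r" using card_cW assms by simp
  show "q' \<in> B1 \<union> B2 - W {p} {q}" unfolding W_def using assms disj by blast
  show "q \<in> E" using assms B2E by blast
  show "q \<notin> B1 \<union> B2 - W {p} {q}" unfolding W_def using assms disj by blast
  show "B1 \<union> B2 - W {p} {q'} = insert q (B1 \<union> B2 - W {p} {q} - {q'})" unfolding W_def using assms disj by blast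
qed

lemma qS: assumes "p \<in> B1" "p' \<in> B1" "q \<in> B2" "p \<noteq> p'"
  shows "indep (W {p} {q}) \<or> indep (W {p'} {q})"
proof (rule sd2')
  show "W {p} {q} \<subseteq> E" using W_sub[of "{q}"] UE assms by blast
  show "card (W {p} {q}) = r" using card_W assms by simp
  show "p' \<in> W {p} {q}" unfolding W_def using assms by blast
  show "p \<in> E" using assms B1E by blast
  show "p \<notin> W {p} {q}" unfolding W_def using assms disj by blast
  show "W {p'} {q} = insert p (W {p} {q} - {p'})" unfolding W_def using assms disj by blast
qed

lemma qT: assumes "p \<in> B1" "p' \<in> B1" "q \<in> B2" "p \<noteq> p'"
  shows "indep (B1 \<union> B2 - W {p} {q}) \<or> indep (B1 \<union> B2 - W {p'} {q})"
proof (rule sd2')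
  show "B1 \<union> B2 - W {p} {q} \<subseteq> E" using UE by blast
  show "card (B1 \<union> B2 - W {p} {q}) = r" using card_cW assms by simp
  show "p \<in> B1 \<union> B2 - W {p} {q}" unfolding W_def using assms disj by blast
  show "p' \<in> E" using assms B1E by blast
  show "p' \<notin> B1 \<union> B2 - W {p} {q}" unfolding W_def using assms disj by blast
  show "B1 \<union> B2 - W {p'} {q} = insert p' (B1 \<union> B2 - W {p} {q} - {p})" unfolding W_def using assms disj by blast
qed

lemma three_q: assumes "p \<in> B1" "q1 \<in> B2" "q2 \<in> B2" "q3 \<in> B2" "q1 \<noteq> q2" "q1 \<noteq> q3" "q2 \<noteq> q3"
  "\<not> G (W {p} {q1})" "\<not> G (W {p} {q2})" "\<not> G (W {p} {q3})" shows False
  using pS[of p q1 q2] pS[of p q1 q3] pS[of p q2 q3] pT[of p q1 q2] pT[of p q1 q3] pT[of p q2 q3] assms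
  unfolding G_def by blast

lemma three_p: assumes "q \<in> B2" "p1 \<in> B1" "p2 \<in> B1" "p3 \<in> B1" "p1 \<noteq> p2" "p1 \<noteq> p3" "p2 \<noteq> p3"
  "\<not> G (W {p1} {q})" "\<not> G (W {p2} {q})" "\<not> G (W {p3} {q})" shows False
  using qS[of p1 p2 q] qS[of p1 p3 q] qS[of p2 p3 q] qT[of p1 p2 q] qT[of p1 p3 q] qT[of p2 p3 q] assms
  unfolding G_def by blast

end

context spm begin

lemma choose3: assumes PB: "P \<subseteq> B1" and QB: "Q \<subseteq> B2" and cP: "card P = n" and cQ: "card Q = n" and n3: "3 \<le> n"
  shows "\<exists>x\<in>P. \<exists>y\<in>Q. G (W (P-{x}) (Q-{y})) \<and> OK (P-{x}) (Q-{y})"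
proof -
  have fP: "finite P" using PB fB1 finite_subset by blast
  have fQ: "finite Q" using QB fB2 finite_subset by blast
  define S1 where "S1 = {d \<in> P \<times> Q. \<not> indep (W (P - {fst d}) (Q - {snd d}))}"
  define S2 where "S2 = {d \<in> P \<times> Q. \<not> indep (B1 \<union> B2 - W (P - {fst d}) (Q - {snd d}))}"
  define S3 where "S3 = {d \<in> P \<times> Q. \<not> OK (P - {fst d}) (Q - {snd d})}"
  have cPx: "card (P - {x}) = card (Q - {y})" if "x \<in> P" "y \<in> Q" for x y
    using that fP fQ cP cQ by simp
  have c1: "card S1 \<le> n"
  proof -
    have "card S1 \<le> card P"
    proof (rule card_fun_le[of S1 P Q])
      show "S1 \<subseteq> P \<times> Q" unfolding S1_def by blast
      show "finite P" by fact
      fix x y y' assume a: "(x,y) \<in> S1" "(x,y') \<in> S1"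
      show "y = y'"
      proof (rule ccontr)
        assume ne: "y \<noteq> y'"
        have xy: "x \<in> P" "y \<in> Q" "y' \<in> Q" using a unfolding S1_def by auto
        have "indep (W (P-{x}) (Q-{y})) \<or> indep (W (P-{x}) (Q-{y'}))"
        proof (rule sd2')
          show "W (P-{x}) (Q-{y}) \<subseteq> E" using W_sub[of "Q-{y}"] UE QB by blast
          show "card (W (P-{x}) (Q-{y})) = r" by (rule card_W) (use PB QB cPx xy in auto)
          show "y' \<in> W (P-{x}) (Q-{y})" unfolding W_def using xy ne by blast
          show "y \<in> E" using xy QB B2E by blast
          show "y \<notin> W (P-{x}) (Q-{y})" unfolding W_def using xy QB disj by blast
          show "W (P-{x}) (Q-{y'}) = insert y (W (P-{x}) (Q-{y}) - {y'})"
            unfolding W_def using xy QB disj ne by blast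
        qed
        then show False using a unfolding S1_def by auto
      qed
    qed
    then show ?thesis using cP by simp
  qed
  have c2: "card S2 \<le> n"
  proof -
    have "card S2 \<le> card P"
    proof (rule card_fun_le[of S2 P Q])
      show "S2 \<subseteq> P \<times> Q" unfolding S2_def by blast
      show "finite P" by fact
      fix x y y' assume a: "(x,y) \<in> S2" "(x,y') \<in> S2"
      show "y = y'"
      proof (rule ccontr)
        assume ne: "y \<noteq> y'"
        have xy: "x \<in> P" "y \<in> Q" "y' \<in> Q" using a unfolding S2_def by auto
        have "indep (B1 \<union> B2 - W (P-{x}) (Q-{y})) \<or> indep (B1 \<union> B2 - W (P-{x}) (Q-{y'}))"
        proof (rule sd2')
          show "B1 \<union> B2 - W (P-{x}) (Q-{y}) \<subseteq> E" using UE by blast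
          show "card (B1 \<union> B2 - W (P-{x}) (Q-{y})) = r" by (rule card_cW) (use PB QB cPx xy in auto)
          show "y \<in> B1 \<union> B2 - W (P-{x}) (Q-{y})" unfolding W_def using xy QB disj by blast
          show "y' \<in> E" using xy QB B2E by blast
          show "y' \<notin> B1 \<union> B2 - W (P-{x}) (Q-{y})" unfolding W_def using xy ne by blast
          show "B1 \<union> B2 - W (P-{x}) (Q-{y'}) = insert y' (B1 \<union> B2 - W (P-{x}) (Q-{y}) - {y})"
            unfolding W_def using xy QB disj ne by blast
        qed
        then show False using a unfolding S2_def by auto
      qed
    qed
    then show ?thesis using cP by simp
  qed
  have fS3: "finite S3" unfolding S3_def using fP fQ by simp
  have c3: "card S3 \<le> 1"
  proof -
    have "\<forall>d1\<in>S3. \<forall>d2\<in>S3. d1 = d2"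
    proof (intro ballI)
      fix d1 d2 assume d: "d1 \<in> S3" "d2 \<in> S3"
      obtain x y where d1: "d1 = (x,y)" by (cases d1)
      obtain x' y' where d2: "d2 = (x',y')" by (cases d2)
      have m: "x \<in> P" "y \<in> Q" "x' \<in> P" "y' \<in> Q" using d d1 d2 unfolding S3_def by auto
      have D1: "\<And>p q. p \<in> P - {x} \<Longrightarrow> q \<in> Q - {y} \<Longrightarrow> \<not> G (W {p} {q})"
        using d(1) d1 unfolding S3_def OK_def by auto
      have D2: "\<And>p q. p \<in> P - {x'} \<Longrightarrow> q \<in> Q - {y'} \<Longrightarrow> \<not> G (W {p} {q})"
        using d(2) d2 unfolding S3_def OK_def by auto
      have PB': "\<And>p. p \<in> P \<Longrightarrow> p \<in> B1" using PB by blast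
      have QB': "\<And>q. q \<in> Q \<Longrightarrow> q \<in> B2" using QB by blast
      show "d1 = d2"
      proof (rule ccontr)
        assume ne: "d1 \<noteq> d2"
        show False
        proof (cases "x = x'")
          case True
          then have yy: "y \<noteq> y'" using ne d1 d2 by simp
          obtain p where p: "p \<in> P" "p \<noteq> x" using third[OF fP, of x x] cP n3 by auto
          obtain c where c: "c \<in> Q" "c \<noteq> y" "c \<noteq> y'" using third[OF fQ, of y y'] cQ n3 by auto
          show False using three_q[of p y' y c] D1[of p y'] D2[of p y] D1[of p c] p c m yy True PB' QB'
            by blast
        next
          case False
          obtain a where a: "a \<in> P" "a \<noteq> x" "a \<noteq> x'" using third[OF fP, of x x'] cP n3 by auto
          show False
          proof (cases "y = y'")
            case True
            obtain c where c: "c \<in> Q" "c \<noteq> y" using third[OF fQ, of y y] cQ n3 by auto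
            show False using three_p[of c x' x a] D1[of x' c] D2[of x c] D1[of a c] a c m True False PB' QB'
              by blast
          next
            case yy: False
            obtain c where c: "c \<in> Q" "c \<noteq> y" "c \<noteq> y'" using third[OF fQ, of y y'] cQ n3 by auto
            show False using three_q[of a y' y c] D1[of a y'] D2[of a y] D1[of a c] a c m yy PB' QB'
              by blast
          qed
        qed
      qed
    qed
    then show ?thesis using card_le_Suc0_iff_eq[OF fS3] by simp
  qed
  have fS: "finite (S1 \<union> S2 \<union> S3)" unfolding S1_def S2_def S3_def using fP fQ by simp
  have "card (S1 \<union> S2 \<union> S3) \<le> card S1 + card S2 + card S3"
    by (meson add_le_mono card_Un_le le_refl order_trans)
  also have "\<dots> \<le> 2 * n + 1" using c1 c2 c3 by simp
  also have "\<dots> < n * n"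
  proof -
    have "3 * n \<le> n * n" using n3 by (rule mult_le_mono1)
    then show ?thesis using n3 by linarith
  qed
  also have "\<dots> = card (P \<times> Q)" using cP cQ by (simp add: card_cartesian_product)
  finally have "card (S1 \<union> S2 \<union> S3) < card (P \<times> Q)" .
  then have "\<not> P \<times> Q \<subseteq> S1 \<union> S2 \<union> S3" using fS card_mono by (metis not_le)
  then obtain x y where xy: "x \<in> P" "y \<in> Q" "(x,y) \<notin> S1 \<union> S2 \<union> S3" by auto
  then show ?thesis unfolding S1_def S2_def S3_def G_def by auto
qed

end


lemma bij_upd: assumes "bij_betw f A B" "a \<notin> A" "b \<notin> B"
  shows "bij_betw (f(a:=b)) (insert a A) (insert b B)"
proof -
  have "bij_betw (f(a:=b)) A B = bij_betw f A B" by (rule bij_betw_cong) (use assms(2) in auto)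
  then have "bij_betw (f(a:=b)) A B" using assms(1) by simp
  moreover have "bij_betw (f(a:=b)) {a} {b}" by (simp add: bij_betw_def)
  ultimately have "bij_betw (f(a:=b)) (A \<union> {a}) (B \<union> {b})"
    by (rule bij_betw_combine) (use assms(3) in auto)
  then show ?thesis by simp
qed

context spm begin

lemma step_choice: assumes PB: "P \<subseteq> B1" and QB: "Q \<subseteq> B2" and cP: "card P = Suc j" and cQ: "card Q = Suc j"
  and ok: "OK P Q"
  shows "\<exists>x\<in>P. \<exists>y\<in>Q. G (W (P-{x}) (Q-{y})) \<and> OK (P-{x}) (Q-{y})"
proof -
  have fP: "finite P" using PB fB1 finite_subset by blast
  have fQ: "finite Q" using QB fB2 finite_subset by blast
  consider "j = 0" | "j = 1" | "j \<ge> 2" by linarith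
  then show ?thesis
  proof cases
    case 1
    obtain x where x: "P = {x}" using cP 1 card_1_singletonE by auto
    obtain y where y: "Q = {y}" using cQ 1 card_1_singletonE by auto
    have "W {} {} = B1" unfolding W_def by simp
    then show ?thesis using x y G_B1 unfolding OK_def by auto
  next
    case 2
    obtain p q where pq: "p \<in> P" "q \<in> Q" "G (W {p} {q})" using ok cP 2 unfolding OK_def by auto
    obtain x where x: "x \<in> P" "x \<noteq> p"
      using cP 2 by (metis card_2_iff insertCI numeral_2_eq_2 One_nat_def)
    obtain y where y: "y \<in> Q" "y \<noteq> q"
      using cQ 2 by (metis card_2_iff insertCI numeral_2_eq_2 One_nat_def)
    have c1: "card (P - {x}) = 1" using cP 2 x fP by simp
    have c2: "card (Q - {y}) = 1" using cQ 2 y fQ by simp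
    have e1: "P - {x} = {p}" using c1 pq x by (metis card_1_singletonE singletonD DiffI singletonD)
    have e2: "Q - {y} = {q}" using c2 pq y by (metis card_1_singletonE singletonD DiffI singletonD)
    have "OK {p} {q}" unfolding OK_def by simp
    then show ?thesis using x y e1 e2 pq by metis
  next
    case 3
    show ?thesis by (rule choose3[OF PB QB cP cQ]) (use 3 in simp)
  qed
qed

lemma main: "P \<subseteq> B1 \<Longrightarrow> Q \<subseteq> B2 \<Longrightarrow> card P = j \<Longrightarrow> card Q = j \<Longrightarrow> G (W P Q) \<Longrightarrow> OK P Q \<Longrightarrow>
  \<exists>\<alpha> \<gamma>. bij_betw \<alpha> {..<j} P \<and> bij_betw \<gamma> {..<j} Q \<and> (\<forall>k\<le>j. G (W (\<alpha> ` {..<k}) (\<gamma> ` {..<k})))"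
proof (induction j arbitrary: P Q)
  case 0
  have "P = {}" using 0 fB1 finite_subset by (metis card_0_eq)
  moreover have "Q = {}" using 0 fB2 finite_subset by (metis card_0_eq)
  ultimately show ?case using 0 by (auto simp: bij_betw_def)
next
  case (Suc j)
  obtain x y where xy: "x \<in> P" "y \<in> Q" "G (W (P-{x}) (Q-{y}))" "OK (P-{x}) (Q-{y})"
    using step_choice[OF Suc.prems(1-4,6)] by blast
  have fP: "finite P" using Suc.prems fB1 finite_subset by blast
  have fQ: "finite Q" using Suc.prems fB2 finite_subset by blast
  obtain \<alpha> \<gamma> where ag: "bij_betw \<alpha> {..<j} (P-{x})" "bij_betw \<gamma> {..<j} (Q-{y})"
    "\<forall>k\<le>j. G (W (\<alpha> ` {..<k}) (\<gamma> ` {..<k}))"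
    using Suc.IH[of "P-{x}" "Q-{y}"] Suc.prems xy fP fQ by auto
  define \<alpha>' where "\<alpha>' = \<alpha>(j:=x)"
  define \<gamma>' where "\<gamma>' = \<gamma>(j:=y)"
  have b1': "bij_betw \<alpha>' {..<Suc j} P"
    using bij_upd[OF ag(1), of j x] xy unfolding \<alpha>'_def by (simp add: lessThan_Suc insert_absorb)
  have b2': "bij_betw \<gamma>' {..<Suc j} Q"
    using bij_upd[OF ag(2), of j y] xy unfolding \<gamma>'_def by (simp add: lessThan_Suc insert_absorb)
  have "G (W (\<alpha>' ` {..<k}) (\<gamma>' ` {..<k}))" if k: "k \<le> Suc j" for k
  proof (cases "k = Suc j")
    case True
    then show ?thesis using b1' b2' Suc.prems(5) by (simp add: bij_betw_def)
  next
    case False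
    then have "k \<le> j" using k by simp
    moreover have "\<alpha>' ` {..<k} = \<alpha> ` {..<k}" "\<gamma>' ` {..<k} = \<gamma> ` {..<k}"
      using \<open>k \<le> j\<close> unfolding \<alpha>'_def \<gamma>'_def by auto
    ultimately show ?thesis using ag(3) by simp
  qed
  then show ?case using b1' b2' by blast
qed

lemma OK_top: "OK B1 B2"
  unfolding OK_def
proof
  assume c: "card B1 = 2"
  obtain a1 a2 where a: "B1 = {a1,a2}" "a1 \<noteq> a2" using c card_2_iff by metis
  obtain c1 c2 where cc: "B2 = {c1,c2}" "c1 \<noteq> c2" using c cB1 cB2 card_2_iff by metis
  have r2: "r = 2" using c cB1 by simp
  have ne: "a1 \<noteq> c1" "a1 \<noteq> c2" "a2 \<noteq> c1" "a2 \<noteq> c2" using a cc disj by auto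
  have S1: "W {a1} {c1} = {a2,c1}" "B1 \<union> B2 - W {a1} {c1} = {a1,c2}"
    "W {a1} {c2} = {a2,c2}" "B1 \<union> B2 - W {a1} {c2} = {a1,c1}"
    "B1 \<union> B2 - {a2,c1} = {a1,c2}" "B1 \<union> B2 - {a2,c2} = {a1,c1}"
    unfolding W_def using a cc ne by auto
  have sub: "{a2,c1} \<subseteq> E" "{a1,c2} \<subseteq> E" using a cc B1E B2E by auto
  have E1: "a1 \<in> E" "a2 \<in> E" "c1 \<in> E" "c2 \<in> E" using a cc B1E B2E by auto
  have cd: "card {a2,c1} = r" "card {a1,c2} = r" using r2 ne by auto
  have i1: "indep {a2,c1} \<or> indep {a2,c2}"
    by (rule sd2'[of _ c1 c2]) (use sub cd E1 ne cc in auto)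
  have i2: "indep {a2,c1} \<or> indep {a1,c1}"
    by (rule sd2'[of _ a2 a1]) (use sub cd E1 ne a in auto)
  have i3: "indep {a1,c2} \<or> indep {a2,c2}"
    by (rule sd2'[of _ a1 a2]) (use sub cd E1 ne a in auto)
  have i4: "indep {a1,c2} \<or> indep {a1,c1}"
    by (rule sd2'[of _ c2 c1]) (use sub cd E1 ne cc in auto)
  have "G (W {a1} {c1}) \<or> G (W {a1} {c2})" unfolding G_def S1(1,3,5,6) using i1 i2 i3 i4 by blast
  then show "\<exists>p\<in>B1. \<exists>q\<in>B2. G (W {p} {q})" using a cc by blast
qed

end

context spm begin

lemma final: "\<exists>b :: nat \<Rightarrow> 'a.
           bij_betw b {0..<2*r} (B1 \<union> B2) \<and>
           b ` {0..<r} = B1 \<and> b ` {r..<2*r} = B2 \<and>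
           (\<forall>i < 2*r. basis E indep {b ((i + j) mod (2*r)) | j. j < r})"
proof -
  have "W B1 B2 = B2" unfolding W_def by blast
  moreover have "B1 \<union> B2 - B2 = B1" using disj by blast
  ultimately have gt: "G (W B1 B2)" unfolding G_def using iB1 iB2 by simp
  obtain \<alpha> \<gamma> where ag: "bij_betw \<alpha> {..<r} B1" "bij_betw \<gamma> {..<r} B2"
    "\<And>k. k \<le> r \<Longrightarrow> G (W (\<alpha> ` {..<k}) (\<gamma> ` {..<k}))"
    using main[OF _ _ cB1 cB2 gt OK_top] by blast
  have ia: "inj_on \<alpha> {..<r}" and ig: "inj_on \<gamma> {..<r}" using ag by (auto simp: bij_betw_def)
  have ima: "\<alpha> ` {..<r} = B1" and img: "\<gamma> ` {..<r} = B2" using ag by (auto simp: bij_betw_def)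
  define b where "b i = (if i < r then \<alpha> i else \<gamma> (i - r))" for i
  have bA: "b ` {0..<r} = B1" unfolding b_def using ima by auto
  have bB: "b ` {r..<2*r} = B2"
  proof
    show "b ` {r..<2*r} \<subseteq> B2" unfolding b_def using img by auto
    show "B2 \<subseteq> b ` {r..<2*r}"
    proof
      fix z assume "z \<in> B2"
      then obtain k where k: "k < r" "z = \<gamma> k" using img by auto
      then have "b (k + r) = z" unfolding b_def by simp
      moreover have "k + r \<in> {r..<2*r}" using k by simp
      ultimately show "z \<in> b ` {r..<2*r}" by blast
    qed
  qed
  have inj: "inj_on b {0..<2*r}"
  proof (rule inj_onI)
    fix i i' assume i: "i \<in> {0..<2*r}" "i' \<in> {0..<2*r}" "b i = b i'"
    show "i = i'"
    proof (cases "i < r")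
      case True
      show ?thesis
      proof (cases "i' < r")
        case True
        then show ?thesis using \<open>i < r\<close> i ia unfolding b_def by (auto dest: inj_onD)
      next
        case False
        have "\<alpha> i \<in> B1" "\<gamma> (i' - r) \<in> B2" using \<open>i < r\<close> False i ima img by auto
        then show ?thesis using \<open>i < r\<close> False i disj unfolding b_def by auto
      qed
    next
      case False
      show ?thesis
      proof (cases "i' < r")
        case True
        have "\<alpha> i' \<in> B1" "\<gamma> (i - r) \<in> B2" using True False i ima img by auto
        then show ?thesis using True False i disj unfolding b_def by auto
      next
        case False2: False
        have "i - r = i' - r" using False False2 i ig unfolding b_def by (auto dest: inj_onD)
        then show ?thesis using False False2 by simp
      qed
    qed
  qed
  have bij: "bij_betw b {0..<2*r} (B1 \<union> B2)"
  proof -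
    have "{0..<2*r} = {0..<r} \<union> {r..<2*r}" by auto
    then have "b ` {0..<2*r} = B1 \<union> B2" using bA bB by (simp add: image_Un)
    then show ?thesis using inj unfolding bij_betw_def by simp
  qed
  have cmpA: "B1 - \<alpha> ` {..<k} = \<alpha> ` {k..<r}" if "k \<le> r" for k
  proof -
    have "\<alpha> ` ({..<r} - {..<k}) = \<alpha> ` {..<r} - \<alpha> ` {..<k}"
      by (rule inj_on_image_set_diff[OF ia]) (use that in auto)
    moreover have "{..<r} - {..<k} = {k..<r}" by auto
    ultimately show ?thesis using ima by simp
  qed
  have cmpG: "B2 - \<gamma> ` {..<k} = \<gamma> ` {k..<r}" if "k \<le> r" for k
  proof -
    have "\<gamma> ` ({..<r} - {..<k}) = \<gamma> ` {..<r} - \<gamma> ` {..<k}"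
      by (rule inj_on_image_set_diff[OF ig]) (use that in auto)
    moreover have "{..<r} - {..<k} = {k..<r}" by auto
    ultimately show ?thesis using img by simp
  qed
  have subA: "\<alpha> ` {..<k} \<subseteq> B1" and subG: "\<gamma> ` {..<k} \<subseteq> B2" if "k \<le> r" for k
    using ima img that by auto
  have cardA: "card (\<alpha> ` {..<k}) = k" and cardG: "card (\<gamma> ` {..<k}) = k" if "k \<le> r" for k
    using card_image[OF inj_on_subset[OF ia]] card_image[OF inj_on_subset[OF ig]] that by auto
  have win: "basis E indep {b ((i + j) mod (2*r)) | j. j < r}" if i: "i < 2*r" for i
  proof (cases "i < r")
    case True
    have eq: "{b ((i + j) mod (2*r)) | j. j < r} = W (\<alpha> ` {..<i}) (\<gamma> ` {..<i})"
    proof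
      show "{b ((i + j) mod (2*r)) | j. j < r} \<subseteq> W (\<alpha> ` {..<i}) (\<gamma> ` {..<i})"
      proof
        fix z assume "z \<in> {b ((i + j) mod (2*r)) | j. j < r}"
        then obtain j where j: "j < r" "z = b ((i + j) mod (2*r))" by blast
        have m: "(i + j) mod (2*r) = i + j" using j True by simp
        show "z \<in> W (\<alpha> ` {..<i}) (\<gamma> ` {..<i})"
        proof (cases "i + j < r")
          case True
          then have "z = \<alpha> (i+j)" using j m unfolding b_def by simp
          then show ?thesis unfolding W_def using cmpA[of i] \<open>i < r\<close> True by auto
        next
          case False
          then have "z = \<gamma> (i + j - r)" using j m unfolding b_def by simp
          moreover have "i + j - r < i" using False j by simp
          ultimately show ?thesis unfolding W_def by auto
        qed
      qed
      show "W (\<alpha> ` {..<i}) (\<gamma> ` {..<i}) \<subseteq> {b ((i + j) mod (2*r)) | j. j < r}"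
      proof
        fix z assume "z \<in> W (\<alpha> ` {..<i}) (\<gamma> ` {..<i})"
        then have "z \<in> \<alpha> ` {i..<r} \<or> z \<in> \<gamma> ` {..<i}" unfolding W_def using cmpA[of i] True by auto
        then show "z \<in> {b ((i + j) mod (2*r)) | j. j < r}"
        proof
          assume "z \<in> \<alpha> ` {i..<r}"
          then obtain m where m: "i \<le> m" "m < r" "z = \<alpha> m" by auto
          have "(i + (m - i)) mod (2*r) = m" using m by simp
          then have "z = b ((i + (m - i)) mod (2*r))" using m unfolding b_def by simp
          moreover have "m - i < r" using m by simp
          ultimately show ?thesis by blast
        next
          assume "z \<in> \<gamma> ` {..<i}"
          then obtain m where m: "m < i" "z = \<gamma> m" by auto
          have "(i + (m + r - i)) mod (2*r) = m + r" using m True by simp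
          then have "z = b ((i + (m + r - i)) mod (2*r))" using m unfolding b_def by simp
          moreover have "m + r - i < r" using m True by simp
          ultimately show ?thesis by blast
        qed
      qed
    qed
    have "indep (W (\<alpha> ` {..<i}) (\<gamma> ` {..<i}))" using ag(3)[of i] True unfolding G_def by simp
    moreover have "card (W (\<alpha> ` {..<i}) (\<gamma> ` {..<i})) = r"
      using card_W[OF subA subG] cardA cardG True by simp
    ultimately show ?thesis using eq indep_basis by simp
  next
    case False
    define k where "k = i - r"
    have k: "k < r" "i = r + k" using False i unfolding k_def by auto
    have eq: "{b ((i + j) mod (2*r)) | j. j < r} = B1 \<union> B2 - W (\<alpha> ` {..<k}) (\<gamma> ` {..<k})"
    proof -
      have cW: "B1 \<union> B2 - W (\<alpha> ` {..<k}) (\<gamma> ` {..<k}) = \<alpha> ` {..<k} \<union> \<gamma> ` {k..<r}"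
      proof -
        have kl: "k \<le> r" using k by simp
        have a1: "\<alpha> ` {..<k} \<subseteq> B1" using subA[OF kl] .
        have a2: "\<gamma> ` {..<k} \<subseteq> B2" using subG[OF kl] .
        have a3: "B2 - \<gamma> ` {..<k} = \<gamma> ` {k..<r}" using cmpG[OF kl] .
        have "B1 \<union> B2 - (B1 - \<alpha> ` {..<k} \<union> \<gamma> ` {..<k}) = \<alpha> ` {..<k} \<union> (B2 - \<gamma> ` {..<k})"
          using a1 a2 disj by auto
        then show ?thesis unfolding W_def using a3 by simp
      qed
      show ?thesis
      proof
        show "{b ((i + j) mod (2*r)) | j. j < r} \<subseteq> B1 \<union> B2 - W (\<alpha> ` {..<k}) (\<gamma> ` {..<k})"
        proof
          fix z assume "z \<in> {b ((i + j) mod (2*r)) | j. j < r}"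
          then obtain j where j: "j < r" "z = b ((i + j) mod (2*r))" by blast
          show "z \<in> B1 \<union> B2 - W (\<alpha> ` {..<k}) (\<gamma> ` {..<k})"
          proof (cases "k + j < r")
            case True
            have e: "i + j = r + (k + j)" using k by simp
            have l: "r + (k + j) < 2*r" using True by simp
            have "(i + j) mod (2*r) = r + (k + j)" unfolding e using l by (rule mod_less)
            then have "z = \<gamma> (k + j)" using j unfolding b_def by simp
            then show ?thesis using cW True by auto
          next
            case False
            have e: "i + j = (k + j - r) + 2*r" using k False by simp
            have l: "k + j - r < 2*r" using k j by simp
            have "(i + j) mod (2*r) = (k + j - r) mod (2*r)" unfolding e by (rule mod_add_self2)
            also have "\<dots> = k + j - r" using l by (rule mod_less)
            finally have "(i + j) mod (2*r) = k + j - r" .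
            moreover have "k + j - r < k" using False j by simp
            ultimately have "z = \<alpha> (k + j - r)" "k + j - r < k" using j k unfolding b_def by auto
            then show ?thesis using cW by auto
          qed
        qed
        show "B1 \<union> B2 - W (\<alpha> ` {..<k}) (\<gamma> ` {..<k}) \<subseteq> {b ((i + j) mod (2*r)) | j. j < r}"
        proof
          fix z assume "z \<in> B1 \<union> B2 - W (\<alpha> ` {..<k}) (\<gamma> ` {..<k})"
          then have "z \<in> \<alpha> ` {..<k} \<or> z \<in> \<gamma> ` {k..<r}" using cW by auto
          then show "z \<in> {b ((i + j) mod (2*r)) | j. j < r}"
          proof
            assume "z \<in> \<alpha> ` {..<k}"
            then obtain m where m: "m < k" "z = \<alpha> m" by auto
            have e: "i + (m + r - k) = m + 2*r" using m k by simp
            have l: "m < 2*r" using m k by simp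
            have "(i + (m + r - k)) mod (2*r) = m mod (2*r)" unfolding e by (rule mod_add_self2)
            also have "\<dots> = m" using l by (rule mod_less)
            finally have "(i + (m + r - k)) mod (2*r) = m" .
            then have "z = b ((i + (m + r - k)) mod (2*r))" using m k unfolding b_def by simp
            moreover have "m + r - k < r" using m k by linarith
            ultimately show ?thesis by blast
          next
            assume "z \<in> \<gamma> ` {k..<r}"
            then obtain m where m: "k \<le> m" "m < r" "z = \<gamma> m" by auto
            have e: "i + (m - k) = r + m" using m k by simp
            have l: "r + m < 2*r" using m by simp
            have "(i + (m - k)) mod (2*r) = r + m" unfolding e using l by (rule mod_less)
            then have "z = b ((i + (m - k)) mod (2*r))" using m unfolding b_def by simp
            moreover have "m - k < r" using m by simp
            ultimately show ?thesis by blast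
          qed
        qed
      qed
    qed
    have "indep (B1 \<union> B2 - W (\<alpha> ` {..<k}) (\<gamma> ` {..<k}))" using ag(3)[of k] k unfolding G_def by simp
    moreover have "card (B1 \<union> B2 - W (\<alpha> ` {..<k}) (\<gamma> ` {..<k})) = r"
      using card_cW[OF subA subG] cardA cardG k by simp
    ultimately show ?thesis using eq indep_basis by simp
  qed
  show ?thesis using bij bA bB win by blast
qed

end

theorem theorem2p9:
  fixes E :: "'a set" and indep :: "'a set \<Rightarrow> bool" and r :: nat and B1 B2 :: "'a set"
  assumes "sparse_paving E indep"
    and "matroid_rank E indep = r"
    and "basis E indep B1" and "basis E indep B2"
    and "B1 \<inter> B2 = {}"
  shows "\<exists>b :: nat \<Rightarrow> 'a.
           bij_betw b {0..<2*r} (B1 \<union> B2) \<and>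
           b ` {0..<r} = B1 \<and> b ` {r..<2*r} = B2 \<and>
           (\<forall>i < 2*r. basis E indep {b ((i + j) mod (2*r)) | j. j < r})"
proof -
  interpret spm E indep r B1 B2 using assms by unfold_locales
  show ?thesis by (rule final)
qed

end
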